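(* Let $S$ be an $(l,r)$-framed algebra and define $(-,-):S\times S\to\mathbb{C}$ by $(a,b)1=(-1)^{s(\lambda)}a\cdot_0 b$ for $a\in S_\lambda$, $b\in S$ (bilinearly extended). Then for all $\lambda^i$ and $a_i\in S_{\lambda^i}$: (1) $S_{\lambda^1}$ and $S_{\lambda^2}$ are orthogonal if $\lambda^1\ne\lambda^2$; (2) the form is symmetric; (3) $(a_1\cdot a_2,a_3)=(-1)^{s(\lambda^1)}(a_2,a_1\cdot a_3)$; (4) the form is non-degenerate if and only if $S$ is simple.
   Context: Let $\mathrm{IS}=\{0,\frac12,\frac1{16}\}$ with fusion rule $\star$ (values are subsets): $0\star h=h\star0=\{h\}$, $\frac12\star\frac12=\{0\}$, $\frac12\star\frac1{16}=\frac1{16}\star\frac12=\{\frac1{16}\}$, $\frac1{16}\star\frac1{16}=\{0,\frac12\}$; $A(h_0,h_1,h_2,h_3)=\{h: h\in h_2\star h_3,\ h_0\in h_1\star h\}$. For $h\in A(h_0,h_1,h_2,h_3)$, $h'\in A(h_0,h_2,h_1,h_3)$ define $B^{h,h'}_{h_0,h_1,h_2,h_3}$: $B_{*,0,*,*}=B_{*,*,0,*}=1$; $B_{*,\frac12,\frac12,*}=-1$; $B_{a,\frac12,\frac1{16},a'}=B_{a,\frac1{16},\frac12,a'}=i$ if $a$ or $a'$ is $\frac12$, else $-i$; $B^{b,b'}_{a,\frac1{16},\frac1{16},a'}=e^{-\pi i/8}\cdot\{1$ if $a,a'\ne\frac1{16},a=a'$; $i$ if $a,a'\neq\frac1{16},a\ne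 a'$; $\frac{1+i}2$ if $a=a'=\frac1{16},b=b'$; $\frac{1-i}2$ if $a=a'=\frac1{16},b\neq b'\}$. $\mathrm{IS}^{(l,r)}=\mathrm{IS}^l\times\mathrm{IS}^r$, $\lambda=(h_1,..,h_l,\bar h_1,..,\bar h_r)$, $s(\lambda)=\sum h_i-\sum\bar h_j$; $\star$, $A$ componentwise; $B^{\lambda,\lambda'}_{\lambda^0,\dots,\lambda^3}=\prod_{i\le l}B^{h_i,h'_i}_{h^0_i,\dots,h^3_i}\prod_{j\le r}\overline{B^{\bar h_j,\bar h'_j}_{\bar h^0_j,\dots,\bar h^3_j}}$. An $(l,r)$-framed algebra: finite-dimensional $\mathrm{IS}^{(l,r)}$-graded $S=\bigoplus S_\lambda$ over $\mathbb{C}$ with bilinear product, nonzero $1\in S_0$ ($0=(0,\dots,0)$), $a\cdot_\lambda b$ the $S_\lambda$-component of $a\cdot b$, satisfying (FA1) $S_\lambda=0$ unless $s(\lambda)\in\mathbb{Z}$; (FA2) $S_0=\mathbb{C}1$, $1$ a two-sided unit; (FA3) $S_{\lambda^1}\cdot S_{\lambda^2}\subset\bigoplus_{\lambda\in\lambda^1\star\lambda^2}S_\lambda$; (FA4) $a_2\cdot_{\lambda^0}(a_1\cdot_{\lambda'}a_3)=\sum_{\lambda\in A(\lambda^0,\lambda^1,\lambda^2,\lambda^3)}B^{\lambda,\lambda'}_{\lambda^0,\lambda^1,\lambda^2,\lambda^3}a_1\cdot_{\lambda^0}(a_2\cdot_\lambda a_3)$ for $a_i\in S_{\lambda^i}$,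 $\lambda'\in A(\lambda^0,\lambda^2,\lambda^1,\lambda^3)$. An ideal is a graded subspace $M$ with $S\cdot M\subset M$; $S$ is simple if its only ideals are $0$ and $S$. *)

theory Defs
  imports Complex_Main
begin

datatype IS = IS0 | ISh | ISs

fun wt :: "IS \<Rightarrow> real" where
  "wt IS0 = 0" | "wt ISh = 1/2" | "wt ISs = 1/16"

fun fus :: "IS \<Rightarrow> IS \<Rightarrow> IS set" where
  "fus IS0 h = {h}"
| "fus h IS0 = {h}"
| "fus ISh ISh = {IS0}"
| "fus ISh ISs = {ISs}"
| "fus ISs ISh = {ISs}"
| "fus ISs ISs = {IS0, ISh}"

definition Aset :: "IS \<Rightarrow> IS \<Rightarrow> IS \<Rightarrow> IS \<Rightarrow> IS set" where
  "Aset h0 h1 h2 h3 = {h. h \<in> fus h2 h3 \<and> h0 \<in> fus h1 h}"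

text \<open>B^{h,h'}_{h0,h1,h2,h3}. The case h1 = h2 = 1/16 with exactly one of h0, h3 equal
  to 1/16 never occurs (A is then empty); its value is set to 0.\<close>
definition Bc :: "IS \<Rightarrow> IS \<Rightarrow> IS \<Rightarrow> IS \<Rightarrow> IS \<Rightarrow> IS \<Rightarrow> complex" where
  "Bc h h' h0 h1 h2 h3 =
    (if h1 = IS0 \<or> h2 = IS0 then 1
     else if h1 = ISh \<and> h2 = ISh then -1
     else if h1 = ISh \<or> h2 = ISh then (if h0 = ISh \<or> h3 = ISh then \<i> else - \<i>)
     else exp (- (complex_of_real pi * \<i>) / 8) *
       (if h0 \<noteq> ISs \<and> h3 \<noteq> ISs then (if h0 = h3 then 1 else \<i>)
        else if h0 = ISs \<and> h3 = ISs then (if h = h' then (1 + \<i>) / 2 else (1 - \<i>) / 2)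
        else 0))"

type_synonym idx = "IS list \<times> IS list"

definition Lam :: "nat \<Rightarrow> nat \<Rightarrow> idx set" where
  "Lam l r = {(x, y). length x = l \<and> length y = r}"

definition zidx :: "nat \<Rightarrow> nat \<Rightarrow> idx" where
  "zidx l r = (replicate l IS0, replicate r IS0)"

definition sw :: "idx \<Rightarrow> real" where
  "sw la = sum_list (map wt (fst la)) - sum_list (map wt (snd la))"

definition fusL :: "IS list \<Rightarrow> IS list \<Rightarrow> IS list set" where
  "fusL xs ys = {zs. length zs = length xs \<and> (\<forall>i<length xs. zs ! i \<in> fus (xs ! i) (ys ! i))}"

definition fusion :: "idx \<Rightarrow> idx \<Rightarrow> idx set" where
  "fusion la1 la2 = fusL (fst la1) (fst la2) \<times> fusL (snd la1) (snd la2)"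

definition AL :: "IS list \<Rightarrow> IS list \<Rightarrow> IS list \<Rightarrow> IS list \<Rightarrow> IS list set" where
  "AL h0 h1 h2 h3 = {zs. length zs = length h0 \<and>
      (\<forall>i<length h0. zs ! i \<in> Aset (h0 ! i) (h1 ! i) (h2 ! i) (h3 ! i))}"

definition Aidx :: "idx \<Rightarrow> idx \<Rightarrow> idx \<Rightarrow> idx \<Rightarrow> idx set" where
  "Aidx la0 la1 la2 la3 =
     AL (fst la0) (fst la1) (fst la2) (fst la3) \<times> AL (snd la0) (snd la1) (snd la2) (snd la3)"

definition BL :: "IS list \<Rightarrow> IS list \<Rightarrow> IS list \<Rightarrow> IS list \<Rightarrow> IS list \<Rightarrow> IS list \<Rightarrow> complex" where
  "BL h h' h0 h1 h2 h3 = (\<Prod>i<length h0. Bc (h ! i) (h' ! i) (h0 ! i) (h1 ! i) (h2 ! i) (h3 ! i))"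

definition Bidx :: "idx \<Rightarrow> idx \<Rightarrow> idx \<Rightarrow> idx \<Rightarrow> idx \<Rightarrow> idx \<Rightarrow> complex" where
  "Bidx la la' la0 la1 la2 la3 =
     BL (fst la) (fst la') (fst la0) (fst la1) (fst la2) (fst la3) *
     cnj (BL (snd la) (snd la') (snd la0) (snd la1) (snd la2) (snd la3))"

text \<open>The algebra is the whole type 'v, a complex vector space via scale, with grading
  S :: idx => 'v set (S la = 0 for la outside IS^(l,r)).\<close>

definition is_decomp :: "nat \<Rightarrow> nat \<Rightarrow> (idx \<Rightarrow> 'v::ab_group_add set) \<Rightarrow> (idx \<Rightarrow> 'v) \<Rightarrow> 'v \<Rightarrow> bool" where
  "is_decomp l r S c v \<longleftrightarrow> (\<forall>\<mu>. c \<mu> \<in> S \<mu>) \<and> v = (\<Sum>\<mu>\<in>Lam l r. c \<mu>)"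

definition comp :: "nat \<Rightarrow> nat \<Rightarrow> (idx \<Rightarrow> 'v::ab_group_add set) \<Rightarrow> idx \<Rightarrow> 'v \<Rightarrow> 'v" where
  "comp l r S la v = (THE c. is_decomp l r S c v) la"

definition bilinear_map :: "(complex \<Rightarrow> 'v::ab_group_add \<Rightarrow> 'v) \<Rightarrow> ('v \<Rightarrow> 'v \<Rightarrow> 'v) \<Rightarrow> bool" where
  "bilinear_map scale m \<longleftrightarrow>
     (\<forall>x y z. m (x + y) z = m x z + m y z) \<and> (\<forall>x y z. m x (y + z) = m x y + m x z) \<and>
     (\<forall>c x y. m (scale c x) y = scale c (m x y)) \<and> (\<forall>c x y. m x (scale c y) = scale c (m x y))"

definition framed_algebra ::
  "nat \<Rightarrow> nat \<Rightarrow> (complex \<Rightarrow> 'v::ab_group_add \<Rightarrow> 'v) \<Rightarrow> (idx \<Rightarrow> 'v set) \<Rightarrow> ('v \<Rightarrow> 'v \<Rightarrow> 'v) \<Rightarrow> 'v \<Rightarrow> bool" where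
  "framed_algebra l r scale S mult one \<longleftrightarrow>
     vector_space scale \<and>
     (\<exists>B. finite B \<and> module.span scale B = UNIV) \<and>
     (\<forall>la. module.subspace scale (S la)) \<and>
     (\<forall>la. la \<notin> Lam l r \<longrightarrow> S la = {0}) \<and>
     (\<forall>v. \<exists>!c. is_decomp l r S c v) \<and>
     bilinear_map scale mult \<and>
     one \<noteq> 0 \<and>
     \<comment> \<open>FA1\<close>
     (\<forall>la\<in>Lam l r. sw la \<notin> \<int> \<longrightarrow> S la = {0}) \<and>
     \<comment> \<open>FA2\<close>
     S (zidx l r) = range (\<lambda>c. scale c one) \<and>
     (\<forall>a. mult one a = a \<and> mult a one = a) \<and>
     \<comment> \<open>FA3\<close>
     (\<forall>la1\<in>Lam l r. \<forall>la2\<in>Lam l r. \<forall>a\<in>S la1. \<forall>b\<in>S la2. \<forall>la.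
        la \<notin> fusion la1 la2 \<longrightarrow> comp l r S la (mult a b) = 0) \<and>
     \<comment> \<open>FA4\<close>
     (\<forall>la0\<in>Lam l r. \<forall>la1\<in>Lam l r. \<forall>la2\<in>Lam l r. \<forall>la3\<in>Lam l r.
      \<forall>a1\<in>S la1. \<forall>a2\<in>S la2. \<forall>a3\<in>S la3. \<forall>la'\<in>Aidx la0 la2 la1 la3.
        comp l r S la0 (mult a2 (comp l r S la' (mult a1 a3))) =
        (\<Sum>la\<in>Aidx la0 la1 la2 la3.
            scale (Bidx la la' la0 la1 la2 la3) (comp l r S la0 (mult a1 (comp l r S la (mult a2 a3))))))"

definition coef :: "(complex \<Rightarrow> 'v \<Rightarrow> 'v) \<Rightarrow> 'v \<Rightarrow> 'v \<Rightarrow> complex" where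
  "coef scale one u = (THE c. u = scale c one)"

definition bform :: "nat \<Rightarrow> nat \<Rightarrow> (complex \<Rightarrow> 'v::ab_group_add \<Rightarrow> 'v) \<Rightarrow> (idx \<Rightarrow> 'v set) \<Rightarrow>
    ('v \<Rightarrow> 'v \<Rightarrow> 'v) \<Rightarrow> 'v \<Rightarrow> 'v \<Rightarrow> 'v \<Rightarrow> complex" where
  "bform l r scale S mult one a b =
     (\<Sum>la\<in>Lam l r. ((-1::complex) powi \<lfloor>sw la\<rfloor>) *
         coef scale one (comp l r S (zidx l r) (mult (comp l r S la a) b)))"

definition graded_ideal ::
  "nat \<Rightarrow> nat \<Rightarrow> (complex \<Rightarrow> 'v::ab_group_add \<Rightarrow> 'v) \<Rightarrow> (idx \<Rightarrow> 'v set) \<Rightarrow> ('v \<Rightarrow> 'v \<Rightarrow> 'v) \<Rightarrow> 'v set \<Rightarrow> bool" where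
  "graded_ideal l r scale S mult M \<longleftrightarrow>
     module.subspace scale M \<and> (\<forall>v\<in>M. \<forall>la. comp l r S la v \<in> M) \<and> (\<forall>a. \<forall>m\<in>M. mult a m \<in> M)"

definition simple_algebra ::
  "nat \<Rightarrow> nat \<Rightarrow> (complex \<Rightarrow> 'v::ab_group_add \<Rightarrow> 'v) \<Rightarrow> (idx \<Rightarrow> 'v set) \<Rightarrow> ('v \<Rightarrow> 'v \<Rightarrow> 'v) \<Rightarrow> bool" where
  "simple_algebra l r scale S mult \<longleftrightarrow>
     (\<forall>M. graded_ideal l r scale S mult M \<longrightarrow> M = {0} \<or> M = UNIV)"

definition nondegenerate :: "('v::zero \<Rightarrow> 'v \<Rightarrow> complex) \<Rightarrow> bool" where
  "nondegenerate f \<longleftrightarrow> (\<forall>a. (\<forall>b. f a b = 0) \<longrightarrow> a = 0) \<and> (\<forall>b. (\<forall>a. f a b = 0) \<longrightarrow> b = 0)"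

end

theory Submission
  imports Defs
begin

lemma IS_UNIV: "(UNIV :: IS set) = {IS0, ISh, ISs}"
  using IS.exhaust by auto

lemma finite_IS: "finite (UNIV :: IS set)"
  by (simp add: IS_UNIV)

lemma finite_Lam: "finite (Lam l r)"
proof -
  have "Lam l r \<subseteq> {xs. set xs \<subseteq> UNIV \<and> length xs = l} \<times> {xs. set xs \<subseteq> UNIV \<and> length xs = r}"
    by (auto simp: Lam_def)
  moreover have "finite ({xs. set xs \<subseteq> (UNIV::IS set) \<and> length xs = l} \<times> {xs. set xs \<subseteq> (UNIV::IS set) \<and> length xs = r})"
    by (intro finite_cartesian_product finite_lists_length_eq finite_IS)
  ultimately show ?thesis by (rule finite_subset)
qed

lemma fus_sym1: "h3 \<in> fus h1 h2 \<longleftrightarrow> h3 \<in> fus h2 h1"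
  by (cases h1; cases h2; cases h3; simp)
lemma fus_sym2: "h3 \<in> fus h1 h2 \<longleftrightarrow> h2 \<in> fus h1 h3"
  by (cases h1; cases h2; cases h3; simp)
lemma fus_zero: "IS0 \<in> fus h1 h2 \<longleftrightarrow> h1 = h2"
  by (cases h1; cases h2; simp)

lemma Aset_0: "Aset IS0 h1 h2 h3 = (if h1 \<in> fus h2 h3 then {h1} else {})"
  by (auto simp: Aset_def fus_zero)
lemma Aset_3: "Aset h0 h1 h2 IS0 = (if h0 \<in> fus h1 h2 then {h2} else {})"
  by (cases h2; auto simp: Aset_def)

lemma AL_0: assumes "length h1 = n" "length h2 = n"
  shows "AL (replicate n IS0) h1 h2 h3 = (if h1 \<in> fusL h2 h3 then {h1} else {})"
  using assms by (auto simp: AL_def Aset_0 fusL_def split: if_splits intro: nth_equalityI)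

lemma AL_3: assumes "length h2 = n" "length h0 = n" "length h1 = n"
  shows "AL h0 h1 h2 (replicate n IS0) = (if h0 \<in> fusL h1 h2 then {h2} else {})"
  using assms by (auto simp: AL_def Aset_3 fusL_def split: if_splits intro: nth_equalityI)

definition ph :: "IS \<Rightarrow> complex" where "ph h = cis (pi * wt h)"
definition PL :: "IS list \<Rightarrow> complex" where "PL x = (\<Prod>i<length x. ph (x!i))"

lemma ph_simps: "ph IS0 = 1" "ph ISh = \<i>" "ph ISs = cis (pi/16)"
  by (simp_all add: ph_def)

lemma w_eq: "exp (- (complex_of_real pi * \<i>) / 8) = inverse (cis (pi/16) ^ 2)"
proof -
  have 1: "exp (- (complex_of_real pi * \<i>) / 8) = cis (- pi/8)"
    by (simp add: cis_conv_exp algebra_simps)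
  have 2: "cis (pi/16) ^ 2 = cis (pi/8)"
    by (simp add: DeMoivre)
  have "cis (- pi/8) * cis (pi/8) = 1" by (simp add: cis_mult)
  then show ?thesis unfolding 1 2 by (simp add: field_simps)
qed

lemma cz: "cis (pi/16) \<noteq> 0" by simp

lemma C1: "h3 \<in> fus h1 h2 \<Longrightarrow>
  ph h3 ^ 3 * Bc h1 h3 IS0 h1 h3 h2 * Bc h3 h2 h1 h2 h3 IS0 = ph h1 * ph h2 * Bc h1 h2 IS0 h1 h2 h3"
  unfolding Bc_def w_eq
  by (cases h1; cases h2; cases h3; simp add: ph_simps field_simps cz power2_eq_square power3_eq_cube)

lemma C2: "Bc h h IS0 h h IS0 * ph h ^ 2 = 1"
  unfolding Bc_def w_eq
  by (cases h; simp add: ph_simps field_simps cz)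

lemma L1: assumes "length x1 = n" "length x2 = n" "length x3 = n" "x3 \<in> fusL x1 x2"
  shows "PL x3 ^ 3 * BL x1 x3 (replicate n IS0) x1 x3 x2 * BL x3 x2 x1 x2 x3 (replicate n IS0)
        = PL x1 * PL x2 * BL x1 x2 (replicate n IS0) x1 x2 x3"
proof -
  have "PL x3 ^ 3 * BL x1 x3 (replicate n IS0) x1 x3 x2 * BL x3 x2 x1 x2 x3 (replicate n IS0)
     = (\<Prod>i<n. ph (x3!i) ^ 3 * Bc (x1!i) (x3!i) IS0 (x1!i) (x3!i) (x2!i) * Bc (x3!i) (x2!i) (x1!i) (x2!i) (x3!i) IS0)"
    using assms by (simp add: PL_def BL_def prod.distrib prod_power_distrib)
  also have "\<dots> = (\<Prod>i<n. ph (x1!i) * ph (x2!i) * Bc (x1!i) (x2!i) IS0 (x1!i) (x2!i) (x3!i))"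
    using assms by (intro prod.cong refl C1) (auto simp: fusL_def)
  also have "\<dots> = PL x1 * PL x2 * BL x1 x2 (replicate n IS0) x1 x2 x3"
    using assms by (simp add: PL_def BL_def prod.distrib)
  finally show ?thesis .
qed

lemma L2: assumes "length x = n"
  shows "BL x x (replicate n IS0) x x (replicate n IS0) * PL x ^ 2 = 1"
proof -
  have "BL x x (replicate n IS0) x x (replicate n IS0) * PL x ^ 2
     = (\<Prod>i<n. Bc (x!i) (x!i) IS0 (x!i) (x!i) IS0 * ph (x!i) ^ 2)"
    using assms by (simp add: PL_def BL_def prod.distrib prod_power_distrib)
  also have "\<dots> = 1" by (simp add: C2)
  finally show ?thesis .
qed

lemma PL_cis: "PL x = cis (pi * sum_list (map wt x))"
proof (induction x)
  case Nil then show ?case by (simp add: PL_def)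
next
  case (Cons a x)
  have "PL (a # x) = ph a * PL x"
    unfolding PL_def length_Cons prod.lessThan_Suc_shift by simp
  then show ?case using Cons by (simp add: ph_def cis_mult algebra_simps)
qed

definition sg :: "idx \<Rightarrow> complex" where "sg la = (-1::complex) powi \<lfloor>sw la\<rfloor>"

lemma sg_sq: "sg la * sg la = 1" by (simp add: sg_def)

lemma sg_PL: assumes "sw la \<in> \<int>"
  shows "sg la = PL (fst la) * cnj (PL (snd la))"
proof -
  obtain k where k: "sw la = of_int k" using assms Ints_cases by blast
  have "PL (fst la) * cnj (PL (snd la)) = cis (pi * sw la)"
    by (simp add: PL_cis cis_cnj cis_mult sw_def algebra_simps)
  also have "\<dots> = exp (of_int k * (complex_of_real pi * \<i>))"
    by (simp add: k cis_conv_exp algebra_simps)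
  also have "\<dots> = exp (complex_of_real pi * \<i>) powi k"
    by (rule exp_power_int[symmetric])
  also have "\<dots> = sg la" by (simp add: sg_def k)
  finally show ?thesis by simp
qed

lemma S3: assumes "la1 \<in> Lam l r" "la2 \<in> Lam l r" "la3 \<in> Lam l r"
  "sw la1 \<in> \<int>" "sw la2 \<in> \<int>" "sw la3 \<in> \<int>" "la3 \<in> fusion la1 la2"
  shows "sg la3 * Bidx la1 la3 (zidx l r) la1 la3 la2 * Bidx la3 la2 la1 la2 la3 (zidx l r)
       = sg la1 * sg la2 * Bidx la1 la2 (zidx l r) la1 la2 la3"
proof -
  obtain x1 y1 where e1: "la1 = (x1, y1)" by fastforce
  obtain x2 y2 where e2: "la2 = (x2, y2)" by fastforce
  obtain x3 y3 where e3: "la3 = (x3, y3)" by fastforce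
  have len: "length x1 = l" "length x2 = l" "length x3 = l" "length y1 = r" "length y2 = r" "length y3 = r"
    using assms(1-3) by (auto simp: Lam_def e1 e2 e3)
  have f: "x3 \<in> fusL x1 x2" "y3 \<in> fusL y1 y2" using assms(7) by (auto simp: fusion_def e1 e2 e3)
  note A = L1[OF len(1-3) f(1)]
  note B = L1[OF len(4-6) f(2)]
  have s: "sg la1 = PL x1 * cnj (PL y1)" "sg la2 = PL x2 * cnj (PL y2)" "sg la3 = PL x3 * cnj (PL y3)"
    using sg_PL assms(4-6) e1 e2 e3 by auto
  have s3: "sg la3 = sg la3 ^ 3" using sg_sq[of la3] by (simp add: power3_eq_cube)
  have "sg la3 * Bidx la1 la3 (zidx l r) la1 la3 la2 * Bidx la3 la2 la1 la2 la3 (zidx l r)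
      = (PL x3 ^ 3 * BL x1 x3 (replicate l IS0) x1 x3 x2 * BL x3 x2 x1 x2 x3 (replicate l IS0)) *
        cnj (PL y3 ^ 3 * BL y1 y3 (replicate r IS0) y1 y3 y2 * BL y3 y2 y1 y2 y3 (replicate r IS0))"
    apply (subst s3) unfolding s(3)
    by (simp add: Bidx_def zidx_def e1 e2 e3 power_mult_distrib)
  also have "\<dots> = sg la1 * sg la2 * Bidx la1 la2 (zidx l r) la1 la2 la3"
    unfolding A B s by (simp add: Bidx_def zidx_def e1 e2 e3)
  finally show ?thesis .
qed

lemma S2: assumes "la \<in> Lam l r" "sw la \<in> \<int>"
  shows "Bidx la la (zidx l r) la la (zidx l r) = 1"
proof -
  obtain x y where e: "la = (x, y)" by fastforce
  have len: "length x = l" "length y = r" using assms by (auto simp: Lam_def e)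
  have s: "sg la = PL x * cnj (PL y)" using sg_PL assms e by auto
  have "Bidx la la (zidx l r) la la (zidx l r) = Bidx la la (zidx l r) la la (zidx l r) * (sg la * sg la)"
    by (simp add: sg_sq)
  also have "\<dots> = (BL x x (replicate l IS0) x x (replicate l IS0) * PL x ^ 2) *
       cnj (BL y y (replicate r IS0) y y (replicate r IS0) * PL y ^ 2)"
    unfolding s by (simp add: Bidx_def zidx_def e power2_eq_square)
  also have "\<dots> = 1" using L2[OF len(1)] L2[OF len(2)] by simp
  finally show ?thesis .
qed

locale FAL =
  fixes l r :: nat
    and scale :: "complex \<Rightarrow> 'v::ab_group_add \<Rightarrow> 'v"
    and S :: "idx \<Rightarrow> 'v set"
    and mult :: "'v \<Rightarrow> 'v \<Rightarrow> 'v"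
    and one :: 'v
  assumes FA: "framed_algebra l r scale S mult one"
begin

sublocale vs: vector_space scale using FA by (simp add: framed_algebra_def)

abbreviation "L \<equiv> Lam l r"
abbreviation "Z \<equiv> zidx l r"
abbreviation "cp \<equiv> comp l r S"

lemma FAc1: "\<forall>la. vs.subspace (S la)"
  using FA unfolding framed_algebra_def by (elim conjE) assumption
lemma FAc2: "\<forall>la. la \<notin> L \<longrightarrow> S la = {0}"
  using FA unfolding framed_algebra_def by (elim conjE) assumption
lemma FAc3: "\<forall>v. \<exists>!c. is_decomp l r S c v"
  using FA unfolding framed_algebra_def by (elim conjE) assumption
lemma FAc4: "bilinear_map scale mult"
  using FA unfolding framed_algebra_def by (elim conjE) assumption
lemma FAc5: "one \<noteq> 0"
  using FA unfolding framed_algebra_def by (elim conjE) assumption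
lemma FAc6: "\<forall>la\<in>L. sw la \<notin> \<int> \<longrightarrow> S la = {0}"
  using FA unfolding framed_algebra_def by (elim conjE) assumption
lemma FAc7: "S Z = range (\<lambda>c. scale c one)"
  using FA unfolding framed_algebra_def by (elim conjE) assumption
lemma FAc8: "\<forall>a. mult one a = a \<and> mult a one = a"
  using FA unfolding framed_algebra_def by (elim conjE) assumption
lemma FAc9: "\<forall>la1\<in>L. \<forall>la2\<in>L. \<forall>a\<in>S la1. \<forall>b\<in>S la2. \<forall>la.
        la \<notin> fusion la1 la2 \<longrightarrow> cp la (mult a b) = 0"
  using FA unfolding framed_algebra_def by (elim conjE) assumption
lemma FAc10: "\<forall>la0\<in>L. \<forall>la1\<in>L. \<forall>la2\<in>L. \<forall>la3\<in>L.
      \<forall>a1\<in>S la1. \<forall>a2\<in>S la2. \<forall>a3\<in>S la3. \<forall>la'\<in>Aidx la0 la2 la1 la3.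
        cp la0 (mult a2 (cp la' (mult a1 a3))) =
        (\<Sum>la\<in>Aidx la0 la1 la2 la3.
            scale (Bidx la la' la0 la1 la2 la3) (cp la0 (mult a1 (cp la (mult a2 a3)))))"
  using FA unfolding framed_algebra_def by (elim conjE) assumption

lemma sub: "vs.subspace (S la)" using FAc1 by blast
lemma outL: "la \<notin> L \<Longrightarrow> S la = {0}" using FAc2 by blast
lemma uniq: "\<exists>!c. is_decomp l r S c v" using FAc3 by blast
lemma bil: "bilinear_map scale mult" using FAc4 by blast
lemma one_nz: "one \<noteq> 0" using FAc5 by blast
lemma FA1: "la \<in> L \<Longrightarrow> sw la \<notin> \<int> \<Longrightarrow> S la = {0}" using FAc6 by blast
lemma FA2: "S Z = range (\<lambda>c. scale c one)" using FAc7 by blast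
lemma unitl[simp]: "mult one a = a" using FAc8 by blast
lemma unitr[simp]: "mult a one = a" using FAc8 by blast
lemma FA3: "la1 \<in> L \<Longrightarrow> la2 \<in> L \<Longrightarrow> a \<in> S la1 \<Longrightarrow> b \<in> S la2 \<Longrightarrow> la \<notin> fusion la1 la2
   \<Longrightarrow> cp la (mult a b) = 0" using FAc9 by blast
lemma FA4: "la0 \<in> L \<Longrightarrow> la1 \<in> L \<Longrightarrow> la2 \<in> L \<Longrightarrow> la3 \<in> L \<Longrightarrow>
   a1 \<in> S la1 \<Longrightarrow> a2 \<in> S la2 \<Longrightarrow> a3 \<in> S la3 \<Longrightarrow> la' \<in> Aidx la0 la2 la1 la3 \<Longrightarrow>
        cp la0 (mult a2 (cp la' (mult a1 a3))) =
        (\<Sum>la\<in>Aidx la0 la1 la2 la3.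
            scale (Bidx la la' la0 la1 la2 la3) (cp la0 (mult a1 (cp la (mult a2 a3)))))"
  using FAc10 by blast

lemma zero_in[simp]: "0 \<in> S la" using sub vs.subspace_0 by blast
lemma add_in: "x \<in> S la \<Longrightarrow> y \<in> S la \<Longrightarrow> x + y \<in> S la" using sub vs.subspace_add by blast
lemma scale_in: "x \<in> S la \<Longrightarrow> scale c x \<in> S la" using sub vs.subspace_scale by blast
lemma one_in: "one \<in> S Z" unfolding FA2 by (metis rangeI vs.scale_one)
lemma Z_in: "Z \<in> L" by (simp add: zidx_def Lam_def)

lemma madd1: "mult (x + y) z = mult x z + mult y z" using bil by (simp add: bilinear_map_def)
lemma madd2: "mult x (y + z) = mult x y + mult x z" using bil by (simp add: bilinear_map_def)
lemma mscale1: "mult (scale c x) y = scale c (mult x y)" using bil by (simp add: bilinear_map_def)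
lemma mscale2: "mult x (scale c y) = scale c (mult x y)" using bil by (simp add: bilinear_map_def)
lemma mzero1[simp]: "mult 0 y = 0" using madd1[of 0 0 y] by simp
lemma mzero2[simp]: "mult x 0 = 0" using madd2[of x 0 0] by simp
lemma msum1: "mult (\<Sum>i\<in>I. f i) y = (\<Sum>i\<in>I. mult (f i) y)"
  by (induction I rule: infinite_finite_induct) (simp_all add: madd1)
lemma msum2: "mult x (\<Sum>i\<in>I. f i) = (\<Sum>i\<in>I. mult x (f i))"
  by (induction I rule: infinite_finite_induct) (simp_all add: madd2)

lemma cp_dec: "is_decomp l r S (\<lambda>\<mu>. cp \<mu> v) v"
proof -
  have "is_decomp l r S (THE c. is_decomp l r S c v) v" by (rule theI'[OF uniq])
  then show ?thesis unfolding comp_def by (simp add: eta_contract_eq)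
qed
lemma cp_in: "cp \<mu> v \<in> S \<mu>" using cp_dec unfolding is_decomp_def by blast
lemma cp_sum: "v = (\<Sum>\<mu>\<in>L. cp \<mu> v)" using cp_dec unfolding is_decomp_def by blast
lemma cp_unique: "is_decomp l r S c v \<Longrightarrow> cp \<mu> v = c \<mu>"
  using uniq cp_dec by metis
lemma cp_out: "\<mu> \<notin> L \<Longrightarrow> cp \<mu> v = 0" using cp_in outL by blast

lemma cp_hom: assumes "a \<in> S la" shows "cp \<mu> a = (if \<mu> = la then a else 0)"
proof (cases "la \<in> L")
  case True
  have "is_decomp l r S (\<lambda>\<mu>. if \<mu> = la then a else 0) a"
    using assms True by (simp add: is_decomp_def finite_Lam)
  then show ?thesis by (rule cp_unique)
next
  case False
  then have "a = 0" using assms outL by blast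
  have "is_decomp l r S (\<lambda>\<mu>. 0) 0" by (simp add: is_decomp_def)
  then show ?thesis using \<open>a = 0\<close> cp_unique by simp
qed
lemma cp_zero[simp]: "cp \<mu> 0 = 0" using cp_hom[OF zero_in] by simp
lemma cp_self: "a \<in> S la \<Longrightarrow> cp la a = a" using cp_hom by simp
lemma cp_cp: "cp \<nu> (cp \<mu> v) = (if \<nu> = \<mu> then cp \<mu> v else 0)" using cp_hom[OF cp_in] by simp

lemma cp_add: "cp \<mu> (v + w) = cp \<mu> v + cp \<mu> w"
proof -
  have "is_decomp l r S (\<lambda>\<mu>. cp \<mu> v + cp \<mu> w) (v + w)"
    unfolding is_decomp_def
  proof
    show "\<forall>\<mu>. cp \<mu> v + cp \<mu> w \<in> S \<mu>" by (simp add: add_in cp_in)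
    have "v + w = (\<Sum>\<mu>\<in>L. cp \<mu> v) + (\<Sum>\<mu>\<in>L. cp \<mu> w)" using cp_sum by metis
    then show "v + w = (\<Sum>\<mu>\<in>L. cp \<mu> v + cp \<mu> w)" by (simp add: sum.distrib)
  qed
  then show ?thesis by (rule cp_unique)
qed
lemma cp_scale: "cp \<mu> (scale c v) = scale c (cp \<mu> v)"
proof -
  have "is_decomp l r S (\<lambda>\<mu>. scale c (cp \<mu> v)) (scale c v)"
    unfolding is_decomp_def
  proof
    show "\<forall>\<mu>. scale c (cp \<mu> v) \<in> S \<mu>" by (simp add: scale_in cp_in)
    have "scale c v = scale c (\<Sum>\<mu>\<in>L. cp \<mu> v)" using cp_sum by metis
    then show "scale c v = (\<Sum>\<mu>\<in>L. scale c (cp \<mu> v))" by (simp add: vs.scale_sum_right)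
  qed
  then show ?thesis by (rule cp_unique)
qed
lemma cp_sumf: "cp \<mu> (\<Sum>i\<in>I. f i) = (\<Sum>i\<in>I. cp \<mu> (f i))"
  by (induction I rule: infinite_finite_induct) (simp_all add: cp_add)

definition cf :: "'v \<Rightarrow> complex" where "cf u = coef scale one u"
lemma cf_scale_one[simp]: "cf (scale c one) = c"
  unfolding cf_def coef_def using one_nz by (rule_tac the_equality) auto
lemma cf_rep: "u \<in> S Z \<Longrightarrow> u = scale (cf u) one"
  unfolding FA2 by auto

definition C0 :: "'v \<Rightarrow> complex" where "C0 v = cf (cp Z v)"
lemma C0_rep: "cp Z v = scale (C0 v) one" unfolding C0_def using cf_rep cp_in by blast
lemma C0_add: "C0 (v + w) = C0 v + C0 w"
proof -
  have "cp Z (v + w) = scale (C0 v + C0 w) one"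
    by (simp add: cp_add C0_rep[of v] C0_rep[of w] vs.scale_left_distrib)
  then show ?thesis unfolding C0_def by simp
qed
lemma C0_scale: "C0 (scale c v) = c * C0 v"
proof -
  have "cp Z (scale c v) = scale (c * C0 v) one"
    by (simp add: cp_scale C0_rep[of v])
  then show ?thesis unfolding C0_def by simp
qed
lemma C0_zero[simp]: "C0 0 = 0" unfolding C0_def using cf_scale_one[of 0] by simp
lemma C0_sum: "C0 (\<Sum>i\<in>I. f i) = (\<Sum>i\<in>I. C0 (f i))"
  by (induction I rule: infinite_finite_induct) (simp_all add: C0_add)
lemma C0_eq: "cp Z v = cp Z w \<Longrightarrow> C0 v = C0 w" unfolding C0_def by simp

end

declare finite_Lam[simp]

lemma fusL_sym1: "length x = n \<Longrightarrow> length y = n \<Longrightarrow> fusL x y = fusL y x"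
  by (auto simp: fusL_def fus_sym1)
lemma fusL_sym2: "length x = n \<Longrightarrow> length y = n \<Longrightarrow> length z = n \<Longrightarrow> z \<in> fusL x y \<longleftrightarrow> y \<in> fusL x z"
  by (auto simp: fusL_def fus_sym2[of "z!i" "x!i" "y!i" for i])
lemma fusL_zero: "length x = n \<Longrightarrow> length y = n \<Longrightarrow> replicate n IS0 \<in> fusL x y \<longleftrightarrow> x = y"
  by (auto simp: fusL_def fus_zero intro: nth_equalityI)

lemma fusion_sym1: "la1 \<in> Lam l r \<Longrightarrow> la2 \<in> Lam l r \<Longrightarrow> la \<in> fusion la1 la2 \<longleftrightarrow> la \<in> fusion la2 la1"
  by (cases la1; cases la2; simp add: fusion_def Lam_def fusL_sym1[where n=l] fusL_sym1[where n=r])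
lemma fusion_sym2: "la1 \<in> Lam l r \<Longrightarrow> la2 \<in> Lam l r \<Longrightarrow> la3 \<in> Lam l r \<Longrightarrow>
    la3 \<in> fusion la1 la2 \<longleftrightarrow> la2 \<in> fusion la1 la3"
  by (cases la1; cases la2; cases la3; simp add: fusion_def Lam_def fusL_sym2[where n=l] fusL_sym2[where n=r])
lemma fusion_Z: "la1 \<in> Lam l r \<Longrightarrow> la2 \<in> Lam l r \<Longrightarrow> zidx l r \<in> fusion la1 la2 \<longleftrightarrow> la1 = la2"
  by (cases la1; cases la2; simp add: fusion_def Lam_def zidx_def fusL_zero)
lemma Aidx_Z0: "la1 \<in> Lam l r \<Longrightarrow> la2 \<in> Lam l r \<Longrightarrow> la3 \<in> Lam l r \<Longrightarrow>
   Aidx (zidx l r) la1 la2 la3 = (if la1 \<in> fusion la2 la3 then {la1} else {})"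
  by (cases la1; cases la2; cases la3; simp add: Aidx_def fusion_def Lam_def zidx_def AL_0)
lemma Aidx_Z3: "la0 \<in> Lam l r \<Longrightarrow> la1 \<in> Lam l r \<Longrightarrow> la2 \<in> Lam l r \<Longrightarrow>
   Aidx la0 la1 la2 (zidx l r) = (if la0 \<in> fusion la1 la2 then {la2} else {})"
  by (cases la0; cases la1; cases la2; simp add: Aidx_def fusion_def Lam_def zidx_def AL_3)

context FAL begin

abbreviation "bf \<equiv> bform l r scale S mult one"

lemma bform_eq: "bf a b = (\<Sum>la\<in>L. sg la * C0 (mult (cp la a) b))"
  unfolding bform_def sg_def C0_def cf_def by simp

lemma C0_sc: "cp Z v = scale c (cp Z w) \<Longrightarrow> C0 v = c * C0 w"
  by (metis C0_eq C0_scale cp_scale)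

lemma zero_hom: "la \<in> L \<Longrightarrow> sw la \<notin> \<int> \<Longrightarrow> a \<in> S la \<Longrightarrow> a = 0"
  using FA1 by blast

lemma K1: assumes "a \<in> S la" shows "cp Z (mult a b) = cp Z (mult a (cp la b))"
proof (cases "la \<in> L")
  case False
  then have "a = 0" using assms outL by blast
  then show ?thesis by simp
next
  case True
  have "cp Z (mult a b) = cp Z (mult a (\<Sum>\<mu>\<in>L. cp \<mu> b))"
    by (rule arg_cong[OF cp_sum[of b], of "\<lambda>x. cp Z (mult a x)"])
  also have "\<dots> = (\<Sum>\<mu>\<in>L. cp Z (mult a (cp \<mu> b)))" by (simp add: msum2 cp_sumf)
  also have "\<dots> = (\<Sum>\<mu>\<in>L. if \<mu> = la then cp Z (mult a (cp la b)) else 0)"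
  proof (rule sum.cong[OF refl])
    fix \<mu> assume "\<mu> \<in> L"
    show "cp Z (mult a (cp \<mu> b)) = (if \<mu> = la then cp Z (mult a (cp la b)) else 0)"
    proof (cases "\<mu> = la")
      case False
      then have "Z \<notin> fusion la \<mu>" using fusion_Z True \<open>\<mu> \<in> L\<close> by blast
      then show ?thesis using FA3[OF True \<open>\<mu> \<in> L\<close> assms cp_in] False by simp
    qed simp
  qed
  also have "\<dots> = cp Z (mult a (cp la b))" using True by simp
  finally show ?thesis .
qed

lemma H: assumes "a \<in> S la" "la \<in> L" shows "bf a b = sg la * C0 (mult a b)"
proof -
  have "bf a b = (\<Sum>\<nu>\<in>L. if \<nu> = la then sg la * C0 (mult a b) else 0)"
    unfolding bform_eq by (rule sum.cong[OF refl]) (simp add: cp_hom[OF assms(1)])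
  then show ?thesis using assms(2) by simp
qed

lemma E: "bf a b = (\<Sum>la\<in>L. sg la * C0 (mult (cp la a) (cp la b)))"
  unfolding bform_eq by (rule sum.cong[OF refl]) (metis C0_eq K1 cp_in)

lemma H2: assumes "b \<in> S lb" "lb \<in> L" shows "bf x b = sg lb * C0 (mult (cp lb x) b)"
proof -
  have "bf x b = (\<Sum>\<nu>\<in>L. if \<nu> = lb then sg lb * C0 (mult (cp lb x) b) else 0)"
    unfolding E by (rule sum.cong[OF refl]) (simp add: cp_hom[OF assms(1)])
  then show ?thesis using assms(2) by simp
qed

lemma SK: assumes L: "la1 \<in> L" "la2 \<in> L" "\<nu> \<in> L" and a: "a1 \<in> S la1" "a2 \<in> S la2"
  shows "cp \<nu> (mult a2 a1) = scale (Bidx la2 la1 \<nu> la1 la2 Z) (cp \<nu> (mult a1 a2))"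
proof (cases "\<nu> \<in> fusion la1 la2")
  case True
  then have T2: "\<nu> \<in> fusion la2 la1" using fusion_sym1 L by blast
  have A1: "Aidx \<nu> la2 la1 Z = {la1}" using Aidx_Z3[OF L(3) L(2) L(1)] T2 by simp
  have A2: "Aidx \<nu> la1 la2 Z = {la2}" using Aidx_Z3[OF L(3) L(1) L(2)] True by simp
  have "cp \<nu> (mult a2 (cp la1 (mult a1 one))) =
        (\<Sum>la\<in>Aidx \<nu> la1 la2 Z. scale (Bidx la la1 \<nu> la1 la2 Z) (cp \<nu> (mult a1 (cp la (mult a2 one)))))"
    by (rule FA4[OF L(3) L(1) L(2) Z_in a one_in]) (simp add: A1)
  then show ?thesis by (simp add: A2 cp_self[OF a(1)] cp_self[OF a(2)])
next
  case False
  then have F2: "\<nu> \<notin> fusion la2 la1" using fusion_sym1 L by blast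
  show ?thesis using FA3[OF L(1) L(2) a False] FA3[OF L(2) L(1) a(2) a(1) F2] by simp
qed

lemma SY: assumes "la \<in> L" "a \<in> S la" "b \<in> S la"
  shows "cp Z (mult b a) = cp Z (mult a b)"
proof (cases "sw la \<in> \<int>")
  case True
  show ?thesis using SK[OF assms(1) assms(1) Z_in assms(2) assms(3)] S2[OF assms(1) True] by simp
next
  case False
  then show ?thesis using zero_hom assms by (metis mzero1)
qed

lemma fsym3: "la1 \<in> L \<Longrightarrow> la2 \<in> L \<Longrightarrow> la3 \<in> L \<Longrightarrow> la2 \<in> fusion la1 la3 \<longleftrightarrow> la1 \<in> fusion la2 la3"
  by (metis fusion_sym1 fusion_sym2)

lemma F0: assumes L: "la1 \<in> L" "la2 \<in> L" "la3 \<in> L" and a: "a1 \<in> S la1" "a2 \<in> S la2" "a3 \<in> S la3"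
  shows "cp Z (mult a2 (cp la2 (mult a1 a3))) =
         scale (Bidx la1 la2 Z la1 la2 la3) (cp Z (mult a1 (cp la1 (mult a2 a3))))"
proof (cases "la2 \<in> fusion la1 la3")
  case True
  then have T2: "la1 \<in> fusion la2 la3" using fsym3 L by blast
  have A1: "Aidx Z la2 la1 la3 = {la2}" using Aidx_Z0[OF L(2) L(1) L(3)] True by simp
  have A2: "Aidx Z la1 la2 la3 = {la1}" using Aidx_Z0[OF L(1) L(2) L(3)] T2 by simp
  have "cp Z (mult a2 (cp la2 (mult a1 a3))) =
     (\<Sum>la\<in>Aidx Z la1 la2 la3. scale (Bidx la la2 Z la1 la2 la3) (cp Z (mult a1 (cp la (mult a2 a3)))))"
    by (rule FA4[OF Z_in L a]) (simp add: A1)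
  then show ?thesis by (simp add: A2)
next
  case False
  then have F2: "la1 \<notin> fusion la2 la3" using fsym3 L by blast
  show ?thesis using FA3[OF L(1) L(3) a(1) a(3) False] FA3[OF L(2) L(3) a(2) a(3) F2] by simp
qed

lemma part3: assumes L: "la1 \<in> L" "la2 \<in> L" "la3 \<in> L" and a: "a1 \<in> S la1" "a2 \<in> S la2" "a3 \<in> S la3"
  shows "bf (mult a1 a2) a3 = sg la1 * bf a2 (mult a1 a3)"
proof -
  define X where "X = cp la3 (mult a1 a2)"
  define Y where "Y = cp la1 (mult a2 a3)"
  define c where "c = C0 (mult a1 Y)"
  define B1 where "B1 = Bidx la1 la3 Z la1 la3 la2"
  define B2 where "B2 = Bidx la3 la2 la1 la2 la3 Z"
  define B3 where "B3 = Bidx la1 la2 Z la1 la2 la3"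
  have X: "X \<in> S la3" unfolding X_def by (rule cp_in)
  have "bf (mult a1 a2) a3 = sg la3 * C0 (mult X a3)" unfolding X_def by (rule H2[OF a(3) L(3)])
  also have "C0 (mult X a3) = C0 (mult a3 X)" by (rule C0_eq) (rule SY[OF L(3) a(3) X])
  also have "C0 (mult a3 X) = B1 * C0 (mult a1 (cp la1 (mult a3 a2)))"
    unfolding B1_def X_def by (rule C0_sc) (rule F0[OF L(1) L(3) L(2) a(1) a(3) a(2)])
  also have "cp la1 (mult a3 a2) = scale B2 Y"
    unfolding B2_def Y_def by (rule SK[OF L(2) L(3) L(1) a(2) a(3)])
  also have "C0 (mult a1 (scale B2 Y)) = B2 * c" by (simp add: mscale2 C0_scale c_def)
  finally have LHS: "bf (mult a1 a2) a3 = sg la3 * (B1 * (B2 * c))" .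
  have "bf a2 (mult a1 a3) = sg la2 * C0 (mult a2 (mult a1 a3))" by (rule H[OF a(2) L(2)])
  also have "C0 (mult a2 (mult a1 a3)) = C0 (mult a2 (cp la2 (mult a1 a3)))"
    by (rule C0_eq) (rule K1[OF a(2)])
  also have "\<dots> = B3 * c" unfolding B3_def c_def Y_def
    by (rule C0_sc) (rule F0[OF L a])
  finally have RHS: "bf a2 (mult a1 a3) = sg la2 * (B3 * c)" .
  show ?thesis
  proof (cases "c = 0")
    case True then show ?thesis using LHS RHS by simp
  next
    case False
    then have nz: "a1 \<noteq> 0" "a2 \<noteq> 0" "a3 \<noteq> 0" "Y \<noteq> 0" by (auto simp: c_def Y_def)
    then have ints: "sw la1 \<in> \<int>" "sw la2 \<in> \<int>" "sw la3 \<in> \<int>" using zero_hom L a by blast+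
    have "la1 \<in> fusion la2 la3" using FA3[OF L(2) L(3) a(2) a(3)] nz(4) Y_def by blast
    then have "la3 \<in> fusion la1 la2" by (metis L fusion_sym1 fusion_sym2)
    from S3[OF L ints this] have "sg la3 * B1 * B2 = sg la1 * sg la2 * B3"
      unfolding B1_def B2_def B3_def .
    then show ?thesis using LHS RHS by (simp add: algebra_simps)
  qed
qed

end

context FAL begin

lemma part1: assumes "la1 \<in> L" "la1 \<noteq> la2" "a \<in> S la1" "b \<in> S la2"
  shows "bf a b = 0"
proof -
  have "bf a b = sg la1 * C0 (mult a b)" by (rule H[OF assms(3,1)])
  also have "C0 (mult a b) = C0 (mult a (cp la1 b))" by (rule C0_eq) (rule K1[OF assms(3)])
  also have "cp la1 b = 0" using cp_hom[OF assms(4)] assms(2) by simp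
  finally show ?thesis by simp
qed

lemma part2: "bf a b = bf b a"
  unfolding E by (rule sum.cong[OF refl]) (metis C0_eq SY cp_in)

lemma BF_add1: "bf (a + a') b = bf a b + bf a' b"
  unfolding bform_eq by (simp add: cp_add madd1 C0_add sum.distrib distrib_left)
lemma BF_scale1: "bf (scale c a) b = c * bf a b"
  unfolding bform_eq by (simp add: cp_scale mscale1 C0_scale sum_distrib_left mult.left_commute)
lemma BF_zero1[simp]: "bf 0 b = 0"
  unfolding bform_eq by simp
lemma BF_zero2[simp]: "bf a 0 = 0"
  using part2 BF_zero1 by metis
lemma BF_sum1: "bf (\<Sum>i\<in>I. f i) b = (\<Sum>i\<in>I. bf (f i) b)"
  by (induction I rule: infinite_finite_induct) (simp_all add: BF_add1)
lemma BF_sum2: "bf b (\<Sum>i\<in>I. f i) = (\<Sum>i\<in>I. bf b (f i))"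
  by (metis (no_types, lifting) BF_sum1 part2 sum.cong)

lemma BF_comp: "bf (cp \<mu> a) b = bf a (cp \<mu> b)"
proof (cases "\<mu> \<in> L")
  case True
  have "bf (cp \<mu> a) b = sg \<mu> * C0 (mult (cp \<mu> a) b)" by (rule H[OF cp_in True])
  also have "C0 (mult (cp \<mu> a) b) = C0 (mult (cp \<mu> a) (cp \<mu> b))" by (rule C0_eq) (rule K1[OF cp_in])
  finally have 1: "bf (cp \<mu> a) b = sg \<mu> * C0 (mult (cp \<mu> a) (cp \<mu> b))" .
  have "bf a (cp \<mu> b) = (\<Sum>\<nu>\<in>L. if \<nu> = \<mu> then sg \<mu> * C0 (mult (cp \<mu> a) (cp \<mu> b)) else 0)"
    unfolding E by (rule sum.cong[OF refl]) (simp add: cp_cp)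
  then show ?thesis using 1 True by simp
next
  case False
  then show ?thesis by (simp add: cp_out)
qed

definition R where "R = {a. \<forall>b. bf a b = 0}"

lemma R_ideal: "graded_ideal l r scale S mult R"
  unfolding graded_ideal_def
proof (intro conjI)
  show "vs.subspace R"
    by (rule vs.subspaceI) (auto simp: R_def BF_add1 BF_scale1)
  show "\<forall>v\<in>R. \<forall>la. cp la v \<in> R" by (auto simp: R_def BF_comp)
  show "\<forall>x. \<forall>a\<in>R. mult x a \<in> R"
  proof (intro allI ballI)
    fix x a assume aR: "a \<in> R"
    have "bf (mult x a) b = 0" for b
    proof -
      have "bf (mult x a) b = bf (mult (\<Sum>k\<in>L. cp k x) (\<Sum>\<mu>\<in>L. cp \<mu> a)) (\<Sum>\<nu>\<in>L. cp \<nu> b)"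
        by (simp only: cp_sum[symmetric])
      also have "\<dots> = (\<Sum>\<nu>\<in>L. \<Sum>\<mu>\<in>L. \<Sum>k\<in>L. bf (mult (cp k x) (cp \<mu> a)) (cp \<nu> b))"
        by (simp add: msum1 msum2 BF_sum1 BF_sum2)
      also have "\<dots> = 0"
      proof (intro sum.neutral ballI)
        fix nu mu la assume "nu \<in> L" "mu \<in> L" "la \<in> L"
        have "bf (mult (cp la x) (cp mu a)) (cp nu b) = sg la * bf (cp mu a) (mult (cp la x) (cp nu b))"
          by (rule part3[OF \<open>la \<in> L\<close> \<open>mu \<in> L\<close> \<open>nu \<in> L\<close> cp_in cp_in cp_in])
        also have "bf (cp mu a) (mult (cp la x) (cp nu b)) = 0"
          using aR by (simp add: R_def BF_comp)
        finally show "bf (mult (cp la x) (cp mu a)) (cp nu b) = 0" by simp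
      qed
      finally show ?thesis .
    qed
    then show "mult x a \<in> R" by (simp add: R_def)
  qed
qed

lemma bf_one: "bf one one = 1"
proof -
  have "bf one one = sg Z * C0 (mult one one)" by (rule H[OF one_in Z_in])
  moreover have "sg Z = 1" by (simp add: sg_def sw_def zidx_def sum_list_replicate)
  moreover have "C0 one = 1" unfolding C0_def using cp_self[OF one_in] cf_scale_one[of 1] by simp
  ultimately show ?thesis by simp
qed

lemma part4: "nondegenerate bf \<longleftrightarrow> simple_algebra l r scale S mult"
proof
  assume nd: "nondegenerate bf"
  show "simple_algebra l r scale S mult" unfolding simple_algebra_def
  proof (intro allI impI)
    fix M assume gi: "graded_ideal l r scale S mult M"
    have subM: "vs.subspace M" and cM: "\<And>v la. v \<in> M \<Longrightarrow> cp la v \<in> M"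
      and iM: "\<And>a m. m \<in> M \<Longrightarrow> mult a m \<in> M" using gi unfolding graded_ideal_def by blast+
    show "M = {0} \<or> M = UNIV"
    proof (cases "M = {0}")
      case False
      then obtain m where m: "m \<in> M" "m \<noteq> 0" using vs.subspace_0[OF subM] by blast
      obtain \<mu> where mu: "\<mu> \<in> L" "cp \<mu> m \<noteq> 0"
      proof (rule ccontr)
        assume "\<not> thesis"
        then have "\<forall>\<mu>\<in>L. cp \<mu> m = 0" using that by blast
        then have "(\<Sum>\<mu>\<in>L. cp \<mu> m) = 0" by simp
        then show False using m cp_sum[of m] by simp
      qed
      define a where "a = cp \<mu> m"
      have aM: "a \<in> M" using cM m(1) a_def by simp
      have aS: "a \<in> S \<mu>" unfolding a_def by (rule cp_in)
      obtain b where b: "bf a b \<noteq> 0" using nd mu(2) a_def unfolding nondegenerate_def by blast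
      define b' where "b' = cp \<mu> b"
      have bS: "b' \<in> S \<mu>" unfolding b'_def by (rule cp_in)
      have "bf a b = sg \<mu> * C0 (mult a b')"
        unfolding b'_def using H[OF aS mu(1)] C0_eq[OF K1[OF aS]] by simp
      then have c: "C0 (mult a b') \<noteq> 0" using b by auto
      have "cp Z (mult b' a) \<in> M" using cM iM aM by blast
      moreover have "cp Z (mult b' a) = scale (C0 (mult a b')) one"
        using SY[OF mu(1) aS bS] C0_rep by simp
      ultimately have "scale (C0 (mult a b')) one \<in> M" by simp
      then have "scale (inverse (C0 (mult a b'))) (scale (C0 (mult a b')) one) \<in> M"
        using vs.subspace_scale[OF subM] by blast
      then have "one \<in> M" using c by simp
      then have "x \<in> M" for x using iM[of one x] by simp
      then show ?thesis by blast
    qed simp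
  qed
next
  assume sa: "simple_algebra l r scale S mult"
  then have "R = {0} \<or> R = UNIV" using R_ideal unfolding simple_algebra_def by blast
  moreover have "one \<notin> R" unfolding R_def using bf_one by force
  ultimately have R0: "R = {0}" by blast
  show "nondegenerate bf" unfolding nondegenerate_def
  proof (intro conjI allI impI)
    fix a assume "\<forall>b. bf a b = 0" then show "a = 0" using R0 by (auto simp: R_def)
  next
    fix b assume "\<forall>a. bf a b = 0" then show "b = 0" using R0 part2 by (auto simp: R_def)
  qed
qed

end

theorem mainTheorem3:
  fixes l r :: nat
    and scale :: "complex \<Rightarrow> 'v::ab_group_add \<Rightarrow> 'v"
    and S :: "idx \<Rightarrow> 'v set"
    and mult :: "'v \<Rightarrow> 'v \<Rightarrow> 'v"
    and one :: 'v
  assumes FA: "framed_algebra l r scale S mult one"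
  shows "(\<forall>la1\<in>Lam l r. \<forall>la2\<in>Lam l r. la1 \<noteq> la2 \<longrightarrow>
            (\<forall>a\<in>S la1. \<forall>b\<in>S la2. bform l r scale S mult one a b = 0))
       \<and> (\<forall>a b. bform l r scale S mult one a b = bform l r scale S mult one b a)
       \<and> (\<forall>la1\<in>Lam l r. \<forall>la2\<in>Lam l r. \<forall>la3\<in>Lam l r. \<forall>a1\<in>S la1. \<forall>a2\<in>S la2. \<forall>a3\<in>S la3.
            bform l r scale S mult one (mult a1 a2) a3
              = ((-1::complex) powi \<lfloor>sw la1\<rfloor>) * bform l r scale S mult one a2 (mult a1 a3))
       \<and> (nondegenerate (bform l r scale S mult one) \<longleftrightarrow> simple_algebra l r scale S mult)"
proof -
  interpret F: FAL l r scale S mult one by (rule FAL.intro[OF FA])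
  show ?thesis
    using F.part1 F.part2 F.part3 F.part4 unfolding sg_def by blast
qed

end
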